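(* Let $E_3^*$ be the greedy exponential-progression-free set defined in the context, and let $G_3^*$ be the set of positive integers $m$ such that $v_p(m)\in A_3^*$ for every prime $p\mid m$, where $A_3^*$ is the set of nonnegative integers with no digit $2$ in base $3$. Then an integer $k = p_1^{a_1}p_2^{a_2}\cdots p_n^{a_n}$ (with distinct primes $p_i$ and exponents $a_i\ge 1$) belongs to $E_3^*$ if and only if $\gcd(a_1,a_2,\dots,a_n)$ belongs to $G_3^*$.
   Context: An exponential progression is a triple $x, x^n, x^{n^2}$ with natural numbers $x, n > 1$. $E_3^*$ is constructed greedily: $1\in E_3^*$, and for $k=2,3,4,\dots$ in increasing order, $k$ is put into $E_3^*$ unless there are natural numbers $x,n>1$ with $x\in E_3^*$, $x^n\in E_3^*$ and $k = x^{n^2}$. (So $E_3^* = \{1,2,\dots,15,17,\dots,80,82,\dots\}$.) $G_3^*$ is (by Rankin) the greedy set of positive integers free of 3-term geometric progressions. *)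

theory Defs
  imports Main "HOL-Computational_Algebra.Primes"
begin

text \<open>Since x < x^n < x^(n^2) = k, the recursion is well founded.\<close>
function E3star :: "nat \<Rightarrow> bool" where
  "E3star k = (if k = 0 then False else if k = 1 then True else
     \<not> (\<exists>x\<in>{2..<k}. \<exists>n\<in>{2..<k}. k = x ^ (n\<^sup>2) \<and> E3star x \<and>
          (if x ^ n < k then E3star (x ^ n) else False)))"
  by auto
termination
  by (relation "measure id") auto

definition A3star :: "nat \<Rightarrow> bool" where
  "A3star a \<longleftrightarrow> (\<forall>i. (a div 3 ^ i) mod 3 \<noteq> 2)"

definition G3star :: "nat \<Rightarrow> bool" where
  "G3star m \<longleftrightarrow> m > 0 \<and> (\<forall>p. prime p \<and> p dvd m \<longrightarrow> A3star (multiplicity p m))"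

end

theory Submission imports Defs "HOL-Computational_Algebra.Nth_Powers" begin

declare E3star.simps[simp del]

lemma div_Suc3: "(a::nat) div 3 ^ Suc i = a div 3 div 3 ^ i"
  by (simp add: div_mult2_eq)

lemma A_step: "A3star a \<longleftrightarrow> a mod 3 \<noteq> 2 \<and> A3star (a div 3)"
  unfolding A3star_def
proof
  assume h: "\<forall>i. a div 3 ^ i mod 3 \<noteq> 2"
  have "a mod 3 \<noteq> 2" using h[rule_format, of 0] by simp
  moreover have "\<forall>i. a div 3 div 3 ^ i mod 3 \<noteq> 2"
  proof
    fix i show "a div 3 div 3 ^ i mod 3 \<noteq> 2" using h[rule_format, of "Suc i"] unfolding div_Suc3 .
  qed
  ultimately show "a mod 3 \<noteq> 2 \<and> (\<forall>i. a div 3 div 3 ^ i mod 3 \<noteq> 2)" by blast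
next
  assume h: "a mod 3 \<noteq> 2 \<and> (\<forall>i. a div 3 div 3 ^ i mod 3 \<noteq> 2)"
  show "\<forall>i. a div 3 ^ i mod 3 \<noteq> 2"
  proof
    fix i show "a div 3 ^ i mod 3 \<noteq> 2"
    proof (cases i)
      case 0 then show ?thesis using h by simp
    next
      case (Suc j)
      have "a div 3 div 3^j mod 3 \<noteq> 2" using h by blast
      then show ?thesis unfolding Suc div_Suc3 .
    qed
  qed
qed

lemma A0: "A3star 0" by (simp add: A3star_def)

lemma A_D: assumes "A3star a" shows "a mod 3 \<le> 1" "A3star (a div 3)"
proof -
  have "a mod 3 \<noteq> 2" "A3star (a div 3)" using assms A_step[of a] by blast+
  moreover have "a mod 3 < 3" by simp
  ultimately show "a mod 3 \<le> 1" "A3star (a div 3)" by linarith+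
qed

lemma digit_lemma:
  fixes x' y' z' x0 y0 z0 :: nat
  assumes "x0 \<le> 1" "y0 \<le> 1" "z0 \<le> 1" "3*x' + x0 + (3*z' + z0) = 2 * (3*y' + y0)"
  shows "x' + z' = 2 * y' \<and> x0 = z0"
proof -
  have "(3*(x' + z') + (x0 + z0)) mod 3 = (3*(2*y') + 2*y0) mod 3" using assms(4)
    by (simp add: algebra_simps)
  then have "(x0 + z0) mod 3 = (2*y0) mod 3" by (simp only: mod_mult_self4)
  moreover have "x0 + z0 < 3" "2*y0 < 3" using assms by auto
  ultimately have "x0 + z0 = 2*y0" by simp
  then show ?thesis using assms by (cases "y0 = 0") auto
qed

lemma ap_free: "A3star x \<Longrightarrow> A3star y \<Longrightarrow> A3star z \<Longrightarrow> x + z = 2*y \<Longrightarrow> x = z"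
proof (induction y arbitrary: x z rule: less_induct)
  case (less y)
  show ?case
  proof (cases "y = 0")
    case True then show ?thesis using less.prems by simp
  next
    case False
    have m: "x mod 3 \<le> 1" "y mod 3 \<le> 1" "z mod 3 \<le> 1" using less.prems A_D by blast+
    have A': "A3star (x div 3)" "A3star (y div 3)" "A3star (z div 3)" using less.prems A_D by blast+
    have d: "x = 3*(x div 3) + x mod 3" "z = 3*(z div 3) + z mod 3" by simp_all
    have eq: "3*(x div 3) + x mod 3 + (3*(z div 3) + z mod 3) = 2 * (3*(y div 3) + y mod 3)"
      using less.prems(4) by simp
    have e: "x div 3 + z div 3 = 2 * (y div 3) \<and> x mod 3 = z mod 3"
      by (rule digit_lemma[OF m eq])
    have "x div 3 = z div 3" using less.IH[OF _ A'(1) A'(2) A'(3)] e False by simp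
    then show ?thesis using e d by linarith
  qed
qed

lemma A_I: assumes "r \<le> 1" "A3star L" shows "A3star (3*L + r)"
proof -
  have "(3*L + r) mod 3 = r" "(3*L + r) div 3 = L" using assms(1) by simp_all
  then show ?thesis using A_step[of "3*L+r"] assms by simp
qed

fun lo :: "nat \<Rightarrow> nat" where
  "lo c = (if c = 0 then 0 else 3 * lo (c div 3) + (if c mod 3 = 2 then 0 else c mod 3))"
fun hi :: "nat \<Rightarrow> nat" where
  "hi c = (if c = 0 then 0 else 3 * hi (c div 3) + (if c mod 3 = 2 then 1 else c mod 3))"
declare lo.simps[simp del] hi.simps[simp del]

lemma lo_hi: "A3star (lo c) \<and> A3star (hi c) \<and> lo c + c = 2 * hi c \<and> lo c \<le> hi c"
proof (induction c rule: less_induct)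
  case (less c)
  show ?case
  proof (cases "c = 0")
    case True then show ?thesis by (simp add: lo.simps hi.simps A0)
  next
    case False
    then have IH: "A3star (lo (c div 3)) \<and> A3star (hi (c div 3)) \<and> lo (c div 3) + c div 3 = 2 * hi (c div 3) \<and> lo (c div 3) \<le> hi (c div 3)"
      using less.IH by simp
    have l: "lo c = 3 * lo (c div 3) + (if c mod 3 = 2 then 0 else c mod 3)" using False by (simp add: lo.simps)
    have h: "hi c = 3 * hi (c div 3) + (if c mod 3 = 2 then 1 else c mod 3)" using False by (simp add: hi.simps)
    have r1: "(if c mod 3 = 2 then 0 else c mod 3) \<le> 1" "(if c mod 3 = 2 then 1 else c mod 3) \<le> 1"
      using mod_less_divisor[of 3 c] by auto
    have "A3star (lo c)" unfolding l using A_I[OF r1(1)] IH by blast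
    moreover have "A3star (hi c)" unfolding h using A_I[OF r1(2)] IH by blast
    moreover have "lo c + c = 2 * hi c \<and> lo c \<le> hi c"
    proof -
      define q where "q = c div 3"
      define r where "r = c mod 3"
      have c3: "c = 3*q + r" unfolding q_def r_def by simp
      have "r < 3" unfolding r_def by simp
      then show ?thesis unfolding l h q_def[symmetric] r_def[symmetric] using IH[folded q_def] c3
        by (cases "r = 2") auto
    qed
    ultimately show ?thesis by blast
  qed
qed

lemma lo_eq_hi: assumes "lo c = hi c" shows "A3star c"
proof -
  have "c = lo c" using lo_hi[of c] assms by linarith
  moreover have "A3star (lo c)" using lo_hi[of c] by blast
  ultimately show ?thesis by simp
qed

lemma G_iff: assumes "m > 0" shows "G3star m \<longleftrightarrow> (\<forall>p. prime p \<longrightarrow> A3star (multiplicity p m))"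
proof
  assume h: "G3star m"
  show "\<forall>p. prime p \<longrightarrow> A3star (multiplicity p m)"
  proof (intro allI impI)
    fix p :: nat assume p: "prime p"
    show "A3star (multiplicity p m)"
    proof (cases "p dvd m")
      case True then show ?thesis using h p unfolding G3star_def by blast
    next
      case False then show ?thesis using A0 by (simp add: not_dvd_imp_multiplicity_0)
    qed
  qed
next
  assume "\<forall>p. prime p \<longrightarrow> A3star (multiplicity p m)"
  then show "G3star m" unfolding G3star_def using assms by blast
qed

lemma G_free:
  assumes n: "n \<ge> 2" and a: "G3star a" and b: "G3star (a*n)" and c: "G3star (a*n^2)"
  shows False
proof -
  have a0: "a > 0" using a G3star_def by simp
  obtain p where p: "prime p" "p dvd n" using n prime_factor_nat[of n] by auto
  have n0: "n \<noteq> 0" using n by simp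
  have e: "multiplicity p n > 0" using p n0 by (simp add: prime_multiplicity_gt_zero_iff)
  have m1: "multiplicity p (a*n) = multiplicity p a + multiplicity p n"
    using p a0 n0 by (simp add: prime_elem_multiplicity_mult_distrib)
  have m2: "multiplicity p (a*n^2) = multiplicity p a + 2 * multiplicity p n"
    using p a0 n0 by (simp add: prime_elem_multiplicity_mult_distrib prime_elem_multiplicity_power_distrib)
  have an0: "a*n > 0" "a*n^2 > 0" using a0 n0 by auto
  have "A3star (multiplicity p a)" using G_iff[OF a0] a p(1) by blast
  moreover have "A3star (multiplicity p (a*n))" using G_iff[OF an0(1)] b p(1) by blast
  moreover have "A3star (multiplicity p (a*n^2))" using G_iff[OF an0(2)] c p(1) by blast
  ultimately have h3: "A3star (multiplicity p a)" "A3star (multiplicity p a + multiplicity p n)"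
     "A3star (multiplicity p a + 2 * multiplicity p n)" unfolding m1 m2 by blast+
  have "multiplicity p a = multiplicity p a + 2 * multiplicity p n"
    by (rule ap_free[OF h3(1) h3(2) h3(3)]) simp
  then show False using e by simp
qed

lemma G_greedy:
  assumes m0: "m > 0" and nG: "\<not> G3star m"
  shows "\<exists>a n. n \<ge> 2 \<and> a * n^2 = m \<and> G3star a \<and> G3star (a*n)"
proof -
  define S where "S = prime_factors m"
  define f where "f = (\<lambda>p. multiplicity p m)"
  define a where "a = (\<Prod>p\<in>S. p ^ lo (f p))"
  define b where "b = (\<Prod>p\<in>S. p ^ hi (f p))"
  define n where "n = (\<Prod>p\<in>S. p ^ (hi (f p) - lo (f p)))"
  have fin: "finite S" unfolding S_def by simp
  have pr: "\<And>p. p \<in> S \<Longrightarrow> prime p" unfolding S_def by auto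
  have pos: "\<And>g. (\<Prod>p\<in>S. p ^ g p) > (0::nat)"
    using pr by (simp add: prime_gt_0_nat prod_pos)
  have mult: "\<And>g q. prime q \<Longrightarrow> multiplicity q (\<Prod>p\<in>S. p ^ g p) = (if q \<in> S then g q else 0)"
    using multiplicity_prod_prime_powers[OF fin pr] by blast
  have an: "a * n = b" unfolding a_def n_def b_def
    by (simp add: prod.distrib[symmetric] power_add[symmetric] lo_hi)
  have an2: "a * n^2 = m"
  proof -
    have "a * n^2 = (\<Prod>p\<in>S. p ^ (lo (f p) + (hi (f p) - lo (f p)) * 2))"
      unfolding a_def n_def prod_power_distrib power_mult[symmetric] prod.distrib[symmetric] power_add ..
    also have "\<dots> = (\<Prod>p\<in>S. p ^ f p)"
    proof (rule prod.cong[OF refl])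
      fix p have "lo (f p) + (hi (f p) - lo (f p)) * 2 = f p" using lo_hi[of "f p"] by linarith
      then show "p ^ (lo (f p) + (hi (f p) - lo (f p)) * 2) = p ^ f p" by simp
    qed
    also have "\<dots> = m" unfolding S_def f_def using prime_factorization_nat[OF m0] by simp
    finally show ?thesis .
  qed
  have a0: "a > 0" unfolding a_def by (rule pos)
  have b0: "b > 0" unfolding b_def by (rule pos)
  have Ga: "G3star a" unfolding G_iff[OF a0]
  proof (intro allI impI)
    fix q :: nat assume q: "prime q"
    show "A3star (multiplicity q a)" unfolding a_def mult[OF q] using lo_hi A0 by simp
  qed
  have Gb: "G3star (a*n)" unfolding an G_iff[OF b0]
  proof (intro allI impI)
    fix q :: nat assume q: "prime q"
    show "A3star (multiplicity q b)" unfolding b_def mult[OF q] using lo_hi A0 by simp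
  qed
  obtain p where p: "prime p" "\<not> A3star (f p)" using nG G_iff[OF m0] unfolding f_def by blast
  have "f p \<noteq> 0"
  proof
    assume "f p = 0" with p(2) A0 show False by simp
  qed
  then have pS: "p \<in> S" using p(1) unfolding S_def f_def prime_factors_multiplicity by simp
  have "hi (f p) \<noteq> lo (f p)" using lo_eq_hi p(2) by auto
  then have "multiplicity p n > 0" using mult[OF p(1), of "\<lambda>p. hi (f p) - lo (f p)", folded n_def] pS lo_hi[of "f p"]
    by simp
  then have "n \<noteq> 1" by auto
  moreover have "n > 0" unfolding n_def by (rule pos)
  ultimately have "n \<ge> 2" by simp
  then show ?thesis using an2 Ga Gb by blast
qed

definition gk :: "nat \<Rightarrow> nat" where
  "gk k = Gcd ((\<lambda>p. multiplicity p k) ` prime_factors k)"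

lemma gk_pow: assumes "x > 0" "j > 0" shows "gk (x^j) = j * gk x"
proof -
  have pf: "prime_factors (x^j) = prime_factors x"
    using assms by (auto simp: prime_factors_multiplicity prime_elem_multiplicity_power_distrib)
  have "(\<lambda>p. multiplicity p (x^j)) ` prime_factors x = (*) j ` ((\<lambda>p. multiplicity p x) ` prime_factors x)"
    unfolding image_image using assms
    by (intro image_cong refl) (simp add: prime_elem_multiplicity_power_distrib in_prime_factors_imp_prime)
  then show ?thesis unfolding gk_def pf by (simp add: Gcd_mult)
qed

lemma gk_dvd: assumes "prime p" shows "gk k dvd multiplicity p k"
proof (cases "p \<in> prime_factors k")
  case True then show ?thesis unfolding gk_def by (simp add: Gcd_dvd)
next
  case False
  then have "multiplicity p k = 0" using assms by (simp add: prime_factors_multiplicity)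
  then show ?thesis by simp
qed

lemma gk_pos: assumes "k \<ge> 2" shows "gk k > 0"
proof -
  have k1: "k \<noteq> 1" and k0: "k \<noteq> 0" using assms by simp_all
  obtain p where p: "prime p" "p dvd k" using prime_factor_nat[OF k1] by blast
  have mp: "multiplicity p k > 0" using p k0 by (simp add: prime_multiplicity_gt_zero_iff)
  have "p \<in> prime_factors k" using p k0 by (simp add: in_prime_factors_iff)
  then have mem: "multiplicity p k \<in> (\<lambda>p. multiplicity p k) ` prime_factors k" by (rule imageI)
  have "\<not> ((\<lambda>p. multiplicity p k) ` prime_factors k \<subseteq> {0})"
  proof
    assume "(\<lambda>p. multiplicity p k) ` prime_factors k \<subseteq> {0}"
    then have "multiplicity p k = 0" using mem by blast
    then show False using mp by simp
  qed
  then have "gk k \<noteq> 0" unfolding gk_def Gcd_0_iff .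
  then show ?thesis by simp
qed

lemma gk_root: assumes "k \<ge> 2" "e > 0" "e dvd gk k" shows "\<exists>x. x ^ e = k"
proof -
  have "\<forall>p. prime p \<longrightarrow> e dvd multiplicity p k"
  proof (intro allI impI)
    fix p :: nat assume "prime p"
    show "e dvd multiplicity p k" using dvd_trans[OF assms(3) gk_dvd[OF \<open>prime p\<close>]] .
  qed
  then have "is_nth_power e k" using is_nth_power_conv_multiplicity_nat[OF assms(2)] by blast
  then show ?thesis unfolding is_nth_power_def by auto
qed

lemma main_aux: "k \<ge> 2 \<Longrightarrow> E3star k \<longleftrightarrow> G3star (gk k)"
proof (induction k rule: less_induct)
  case (less k)
  have gpos: "gk k > 0" using gk_pos less.prems .
  have "(\<exists>x\<in>{2..<k}. \<exists>n\<in>{2..<k}. k = x ^ (n\<^sup>2) \<and> E3star x \<and>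
          (if x ^ n < k then E3star (x ^ n) else False)) \<longleftrightarrow>
        (\<exists>a n. n \<ge> 2 \<and> a * n^2 = gk k \<and> G3star a \<and> G3star (a*n))" (is "?L \<longleftrightarrow> ?R")
  proof
    assume ?L
    then obtain x n where x: "2 \<le> x" "x < k" and n: "2 \<le> n" and k: "k = x^(n^2)" and
      ex: "E3star x" and xn: "x^n < k" "E3star (x^n)" by (auto split: if_splits)
    have "x \<le> x^n" using x n by (simp add: self_le_power)
    then have "2 \<le> x^n" using x by linarith
    then have "E3star (x^n) \<longleftrightarrow> G3star (gk (x^n))" using less.IH xn by blast
    moreover have "E3star x \<longleftrightarrow> G3star (gk x)" using less.IH x by blast
    moreover have "gk (x^n) = n * gk x" using gk_pow x n by simp
    moreover have "gk k = n^2 * gk x" using gk_pow x n k by simp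
    ultimately have "G3star (gk x)" "G3star (gk x * n)" "gk x * n^2 = gk k" using ex xn
      by (simp_all add: mult.commute)
    then show ?R using n by blast
  next
    assume ?R
    then obtain a n where n: "n \<ge> 2" and a: "a * n^2 = gk k" and Ga: "G3star a" and Gan: "G3star (a*n)" by blast
    have "n^2 dvd gk k" unfolding a[symmetric] by simp
    moreover have "n^2 > 0" using n by simp
    ultimately obtain x where k: "x ^ (n^2) = k" using gk_root[OF less.prems, of "n^2"] by blast
    have "n * n \<ge> 2 * 2" by (rule mult_le_mono[OF n n])
    then have n2: "n^2 \<ge> 2" by (simp add: power2_eq_square)
    have x0: "x \<noteq> 0"
    proof
      assume "x = 0"
      moreover have "n^2 \<noteq> 0" using n2 by linarith
      ultimately have "k = 0" using k by (simp add: power_0_left)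
      then show False using less.prems by simp
    qed
    have x1: "x \<noteq> 1" using k less.prems by auto
    have x2: "x \<ge> 2" using x0 x1 by linarith
    have "gk k = n^2 * gk x" using gk_pow[of x "n^2"] x2 n2 n k by simp
    then have "n^2 * gk x = n^2 * a" using a by (metis mult.commute)
    then have gx: "gk x = a" using \<open>n^2 > 0\<close> by simp
    have gxn: "gk (x^n) = n * a" using gk_pow[of x n] x2 n gx by simp
    have "n < n^2" using n by (simp add: power2_eq_square)
    then have xnk: "x^n < k" unfolding k[symmetric] using x2 by (intro power_strict_increasing) auto
    have "x^1 < x^n" using x2 n by (intro power_strict_increasing) auto
    then have xk: "x < k" using xnk by simp
    have "n < 2^n" by (rule less_exp)
    also have "\<dots> \<le> x^n" using x2 by (intro power_mono) auto
    finally have nk: "n < k" using xnk by simp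
    have xn2: "x^n \<ge> 2" using \<open>x^1 < x^n\<close> x2 by simp
    have E1: "E3star x" using less.IH[OF xk x2] Ga gx by simp
    have E2: "E3star (x^n)" using less.IH[OF xnk xn2] Gan gxn by (simp add: mult.commute)
    have P: "k = x^(n\<^sup>2) \<and> E3star x \<and> (if x^n < k then E3star (x^n) else False)"
      using k E1 E2 xnk by simp
    have "x \<in> {2..<k}" "n \<in> {2..<k}" using x2 xk n nk by simp_all
    then have xA: "x \<in> {2..<k}" and nA: "n \<in> {2..<k}" by blast+
    have "\<exists>n'\<in>{2..<k}. k = x^(n'\<^sup>2) \<and> E3star x \<and> (if x^n' < k then E3star (x^n') else False)"
      using P nA by (rule bexI)
    then show ?L using xA by (rule bexI)
  qed
  have "E3star k \<longleftrightarrow> \<not> ?L" using less.prems by (subst E3star.simps) simp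
  also have "\<dots> \<longleftrightarrow> \<not> ?R" using \<open>?L \<longleftrightarrow> ?R\<close> by simp
  also have "\<dots> \<longleftrightarrow> G3star (gk k)"
  proof
    assume nR: "\<not> ?R"
    show "G3star (gk k)"
    proof (rule ccontr)
      assume "\<not> G3star (gk k)"
      from G_greedy[OF gpos this] have ?R .
      with nR show False by contradiction
    qed
  next
    assume G: "G3star (gk k)"
    show "\<not> ?R"
    proof
      assume ?R
      then obtain a n where "n \<ge> 2" "a * n^2 = gk k" "G3star a" "G3star (a*n)" by blast
      then show False using G_free[of n a] G by simp
    qed
  qed
  finally show ?case .
qed

theorem mainTheorem3:
  fixes k :: nat
  assumes "k \<ge> 2"
  shows "E3star k \<longleftrightarrow> G3star (Gcd ((\<lambda>p. multiplicity p k) ` prime_factors k))"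
  using main_aux[OF assms] unfolding gk_def .

end
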